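(* Let $\mathcal{L}$ be a language with semantic structure $\mathcal{S}=(\Sigma,I)$. (1) $P_{\mathcal{L}}=\mathrm{par}(\mathrm{AD}_{\mathcal{L}})$ and $\mathrm{pad}(P_{\mathcal{L}})=\mathrm{pad}(\mathrm{par}(\mathrm{AD}_{\mathcal{L}}))$. (2) For $P\in\mathrm{Part}(\Sigma)$: $P$ is strongly preserving for $\mathcal{L}$ iff $P\preceq\mathrm{par}(\mathrm{AD}_{\mathcal{L}})$ iff $\mathrm{pad}(P)\sqsubseteq\mathrm{AD}_{\mathcal{L}}$. (3) If $\mathcal{L}$ is closed under infinite logical conjunction, then $\mathrm{AD}_{\mathcal{L}}$ is partitioning if and only if $\mathcal{L}$ is closed under logical negation.
   Context: A language $\mathcal{L}$ has formulae $\varphi::=p\mid f(\varphi_1,\dots,\varphi_n)$, $p$ in a set of atoms, $f$ in a finite set of operators of arity $\ge1$; a semantic structure $\mathcal{S}=(\Sigma,I)$ interprets atoms as subsets of $\Sigma$ and operators as maps $\wp(\Sigma)^n\to\wp(\Sigma)$, giving compositionally the concrete semantics $[\![\varphi]\!]_{\mathcal{S}}\subseteq\Sigma$. Abstract domains of $\wp(\Sigma)_\subseteq$ are given by Galois insertions $(\alpha,\wp(\Sigma),A,\gamma)$ with closure $\mu_A=\gamma\circ\alpha$, identified when closures coincide, and ordered by $A_1\sqsubseteq A_2$ iff $\mu_{A_1}\le\mu_{A_2}$ pointwise. $\mathrm{AD}_{\mathcal{L}}$ is the abstract domain whose closure has as image all intersections of subfamilies of $\{[\![\varphi]\!]_{\mathcal{S}}\mid\varphi\in\mathcal{L}\}$.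 $\mathrm{Part}(\Sigma)$ is ordered by $P_1\preceq P_2$ iff each block of $P_1$ lies in a block of $P_2$. $\mathrm{pad}(P)$ is the abstract domain with closure $S\mapsto\bigcup\{B\in P\mid B\cap S\ne\varnothing\}$; $A$ is partitioning if it equals $\mathrm{pad}(P)$ for some $P$. $\mathrm{par}(A)$ is the partition into classes of $s\equiv s'\iff\alpha(\{s\})=\alpha(\{s'\})$. $P_{\mathcal{L}}$ is the partition induced by $s\equiv_{\mathcal{L}}s'\iff\forall\varphi.\,(s\in[\![\varphi]\!]_{\mathcal{S}}\Leftrightarrow s'\in[\![\varphi]\!]_{\mathcal{S}})$; $P$ is strongly preserving for $\mathcal{L}$ iff $P\preceq P_{\mathcal{L}}$. $\mathcal{L}$ is closed under infinite logical conjunction if for every $\Phi\subseteq\mathcal{L}$ (including $\varnothing$) some $\psi$ has $[\![\psi]\!]_{\mathcal{S}}=\bigcap_{\varphi\in\Phi}[\![\varphi]\!]_{\mathcal{S}}$; closed under negation if for every $\varphi$ some $\psi$ has $[\![\psi]\!]_{\mathcal{S}}=\Sigma\setminus[\![\varphi]\!]_{\mathcal{S}}$. *)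

theory Defs
  imports Main "HOL-Library.Disjoint_Sets"
begin

text \<open>Formulae over atoms of type 'p and operators of type 'f.
  The state space Sigma is the universe of the type 'a.\<close>

datatype ('p, 'f) formula = Atom 'p | Op 'f "('p, 'f) formula list"

inductive wff :: "('f \<Rightarrow> nat) \<Rightarrow> ('p, 'f) formula \<Rightarrow> bool" for ar where
  wff_Atom: "wff ar (Atom p)"
| wff_Op: "length xs = ar f \<Longrightarrow> (\<forall>x\<in>set xs. wff ar x) \<Longrightarrow> wff ar (Op f xs)"

primrec sem :: "('p \<Rightarrow> 'a set) \<Rightarrow> ('f \<Rightarrow> 'a set list \<Rightarrow> 'a set)
                 \<Rightarrow> ('p, 'f) formula \<Rightarrow> 'a set" where
  "sem I_at I_op (Atom p) = I_at p"
| "sem I_at I_op (Op f xs) = I_op f (map (sem I_at I_op) xs)"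

definition lang :: "('f \<Rightarrow> nat) \<Rightarrow> ('p, 'f) formula set" where
  "lang ar = {\<phi>. wff ar \<phi>}"

text \<open>Abstract domains are identified with their upper closure operators on
  the powerset of Sigma; ordering A1 below A2 iff mu_A1 \<le> mu_A2 pointwise
  (this is just the function order \<le> on 'a set \<Rightarrow> 'a set).\<close>

definition moore :: "'a set set \<Rightarrow> 'a set set" where
  "moore F = {\<Inter>G | G. G \<subseteq> F}"

definition closure_of_moore :: "'a set set \<Rightarrow> 'a set \<Rightarrow> 'a set" where
  "closure_of_moore M = (\<lambda>S. \<Inter>{X \<in> M. S \<subseteq> X})"

definition AD :: "('f \<Rightarrow> nat) \<Rightarrow> ('p \<Rightarrow> 'a set) \<Rightarrow> ('f \<Rightarrow> 'a set list \<Rightarrow> 'a set)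
                   \<Rightarrow> 'a set \<Rightarrow> 'a set" where
  "AD ar I_at I_op = closure_of_moore (moore (sem I_at I_op ` lang ar))"

definition pad :: "'a set set \<Rightarrow> 'a set \<Rightarrow> 'a set" where
  "pad P = (\<lambda>S. \<Union>{B \<in> P. B \<inter> S \<noteq> {}})"

definition partitioning :: "('a set \<Rightarrow> 'a set) \<Rightarrow> bool" where
  "partitioning mu \<longleftrightarrow> (\<exists>P. partition_on UNIV P \<and> mu = pad P)"

text \<open>par(A): classes of s ~ s' iff alpha{s} = alpha{s'}, equivalently
  (Galois insertion) mu_A{s} = mu_A{s'}.\<close>
definition par :: "('a set \<Rightarrow> 'a set) \<Rightarrow> 'a set set" where
  "par mu = UNIV // {(s, s'). mu {s} = mu {s'}}"

definition refines :: "'a set set \<Rightarrow> 'a set set \<Rightarrow> bool" (infix "\<preceq>\<^sub>P" 50) where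
  "P1 \<preceq>\<^sub>P P2 \<longleftrightarrow> (\<forall>B\<in>P1. \<exists>B'\<in>P2. B \<subseteq> B')"

definition PL :: "('f \<Rightarrow> nat) \<Rightarrow> ('p \<Rightarrow> 'a set) \<Rightarrow> ('f \<Rightarrow> 'a set list \<Rightarrow> 'a set)
                   \<Rightarrow> 'a set set" where
  "PL ar I_at I_op = UNIV // {(s, s'). \<forall>\<phi>\<in>lang ar.
      (s \<in> sem I_at I_op \<phi> \<longleftrightarrow> s' \<in> sem I_at I_op \<phi>)}"

definition strongly_preserving ::
  "'a set set \<Rightarrow> ('f \<Rightarrow> nat) \<Rightarrow> ('p \<Rightarrow> 'a set) \<Rightarrow> ('f \<Rightarrow> 'a set list \<Rightarrow> 'a set) \<Rightarrow> bool" where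
  "strongly_preserving P ar I_at I_op \<longleftrightarrow> P \<preceq>\<^sub>P PL ar I_at I_op"

definition closed_inf_conj ::
  "('f \<Rightarrow> nat) \<Rightarrow> ('p \<Rightarrow> 'a set) \<Rightarrow> ('f \<Rightarrow> 'a set list \<Rightarrow> 'a set) \<Rightarrow> bool" where
  "closed_inf_conj ar I_at I_op \<longleftrightarrow>
     (\<forall>\<Phi> \<subseteq> lang ar. \<exists>\<psi>\<in>lang ar. sem I_at I_op \<psi> = (\<Inter>\<phi>\<in>\<Phi>. sem I_at I_op \<phi>))"

definition closed_neg ::
  "('f \<Rightarrow> nat) \<Rightarrow> ('p \<Rightarrow> 'a set) \<Rightarrow> ('f \<Rightarrow> 'a set list \<Rightarrow> 'a set) \<Rightarrow> bool" where
  "closed_neg ar I_at I_op \<longleftrightarrow>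
     (\<forall>\<phi>\<in>lang ar. \<exists>\<psi>\<in>lang ar. sem I_at I_op \<psi> = - sem I_at I_op \<phi>)"

end

theory Submission
  imports Defs
begin

definition cl :: "'a set set \<Rightarrow> 'a set \<Rightarrow> 'a set" where
  "cl F S = \<Inter>{X\<in>F. S \<subseteq> X}"

definition RR :: "'a set set \<Rightarrow> ('a \<times> 'a) set" where
  "RR F = {(s,t). \<forall>X\<in>F. s \<in> X \<longleftrightarrow> t \<in> X}"

lemma L1: "closure_of_moore (moore F) = cl F"
proof (rule ext)
  fix S
  show "closure_of_moore (moore F) S = cl F S"
  proof
    have "F \<subseteq> moore F" unfolding moore_def
    proof
      fix X assume "X \<in> F" then show "X \<in> {\<Inter>G | G. G \<subseteq> F}"
        by (intro CollectI exI[of _ "{X}"]) auto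
    qed
    then show "closure_of_moore (moore F) S \<subseteq> cl F S"
      unfolding closure_of_moore_def cl_def by blast
  next
    show "cl F S \<subseteq> closure_of_moore (moore F) S"
      unfolding closure_of_moore_def cl_def moore_def by blast
  qed
qed

lemma L2: "cl F {s} = cl F {t} \<longleftrightarrow> (\<forall>X\<in>F. s \<in> X \<longleftrightarrow> t \<in> X)"
proof
  assume h: "cl F {s} = cl F {t}"
  have "s \<in> cl F {s}" "t \<in> cl F {t}" unfolding cl_def by auto
  then show "\<forall>X\<in>F. s \<in> X \<longleftrightarrow> t \<in> X" using h unfolding cl_def by blast
next
  assume "\<forall>X\<in>F. s \<in> X \<longleftrightarrow> t \<in> X"
  then show "cl F {s} = cl F {t}" unfolding cl_def by auto
qed

lemma par_cl: "par (cl F) = UNIV // RR F"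
  unfolding par_def RR_def using L2[of F] by simp

lemma equiv_RR: "equiv UNIV (RR F)"
  unfolding equiv_def refl_on_def sym_def trans_def RR_def by auto

lemma part_uniq:
  assumes "partition_on UNIV P" "B \<in> P" "B' \<in> P" "x \<in> B" "x \<in> B'"
  shows "B = B'"
  using assms unfolding partition_on_def disjoint_def by blast

lemma p2:
  assumes P: "partition_on UNIV P"
  shows "(P \<preceq>\<^sub>P UNIV // RR F) \<longleftrightarrow> (pad P \<le> cl F)"
proof
  assume h: "P \<preceq>\<^sub>P UNIV // RR F"
  show "pad P \<le> cl F"
  proof (rule le_funI, rule subsetI)
    fix S t assume "t \<in> pad P S"
    then obtain B s where B: "B \<in> P" "s \<in> B" "s \<in> S" "t \<in> B" unfolding pad_def by blast
    then obtain C where "C \<in> UNIV // RR F" "B \<subseteq> C" using h unfolding refines_def by blast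
    then obtain x where "C = RR F `` {x}" by (auto elim: quotientE)
    then have "(x,s) \<in> RR F" "(x,t) \<in> RR F" using B \<open>B \<subseteq> C\<close> by auto
    then have "\<forall>X\<in>F. s \<in> X \<longleftrightarrow> t \<in> X" unfolding RR_def by auto
    then show "t \<in> cl F S" using B unfolding cl_def by blast
  qed
next
  assume h: "pad P \<le> cl F"
  show "P \<preceq>\<^sub>P UNIV // RR F" unfolding refines_def
  proof
    fix B assume B: "B \<in> P"
    have "B \<noteq> {}" using P B unfolding partition_on_def by blast
    then obtain s where s: "s \<in> B" by blast
    have "B \<subseteq> RR F `` {s}"
    proof
      fix t assume t: "t \<in> B"
      have "t \<in> pad P {s}" using B s t unfolding pad_def by blast
      then have 1: "t \<in> cl F {s}" using h by (auto dest: le_funD)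
      have "s \<in> pad P {t}" using B s t unfolding pad_def by blast
      then have 2: "s \<in> cl F {t}" using h by (auto dest: le_funD)
      from 1 2 show "t \<in> RR F `` {s}" unfolding cl_def RR_def by auto
    qed
    then show "\<exists>B'\<in>UNIV // RR F. B \<subseteq> B'" by (auto intro: quotientI)
  qed
qed

lemma p3:
  assumes inter: "\<forall>G\<subseteq>F. \<Inter>G \<in> F"
  shows "partitioning (cl F) \<longleftrightarrow> (\<forall>X\<in>F. -X \<in> F)"
proof
  assume "partitioning (cl F)"
  then obtain P where P: "partition_on UNIV P" and eq: "cl F = pad P"
    unfolding partitioning_def by blast
  show "\<forall>X\<in>F. -X \<in> F"
  proof
    fix X assume X: "X \<in> F"
    have "cl F X = X" using X unfolding cl_def by blast
    then have pX: "pad P X = X" using eq by simp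
    have "pad P (-X) \<subseteq> -X"
    proof
      fix t assume "t \<in> pad P (-X)"
      then obtain B s where B: "B \<in> P" "s \<in> B" "s \<notin> X" "t \<in> B" unfolding pad_def by blast
      show "t \<in> -X"
      proof
        assume "t \<in> X"
        then have "B \<subseteq> pad P X" using B unfolding pad_def by blast
        then show False using B pX by blast
      qed
    qed
    then have "cl F (-X) \<subseteq> -X" using eq by simp
    moreover have "-X \<subseteq> cl F (-X)" unfolding cl_def by blast
    ultimately have "-X = \<Inter>{Y\<in>F. -X \<subseteq> Y}" unfolding cl_def by blast
    moreover have "\<Inter>{Y\<in>F. -X \<subseteq> Y} \<in> F" using inter by auto
    ultimately show "-X \<in> F" by simp
  qed
next
  assume neg: "\<forall>X\<in>F. -X \<in> F"
  define P where "P = UNIV // RR F"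
  have P: "partition_on UNIV P" unfolding P_def by (rule partition_on_quotient[OF equiv_RR])
  have le: "pad P \<le> cl F" using p2[OF P, of F] unfolding P_def refines_def by blast
  have "cl F = pad P"
  proof (rule ext, rule equalityI)
    fix S
    show "pad P S \<subseteq> cl F S" using le by (auto dest: le_funD)
    define U where "U = (\<Union>s\<in>S. cl F {s})"
    have clF: "cl F {s} \<in> F" for s unfolding cl_def using inter by auto
    have "(\<Inter>s\<in>S. - cl F {s}) \<in> F" using inter neg clF
      by (metis (no_types, lifting) image_subset_iff)
    then have "- (\<Inter>s\<in>S. - cl F {s}) \<in> F" using neg by blast
    moreover have "- (\<Inter>s\<in>S. - cl F {s}) = U" unfolding U_def by blast
    ultimately have UF: "U \<in> F" by simp
    have "S \<subseteq> U" unfolding U_def cl_def by blast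
    then have "cl F S \<subseteq> U" using UF unfolding cl_def by blast
    also have "U \<subseteq> pad P S"
    proof
      fix t assume "t \<in> U"
      then obtain s where s: "s \<in> S" "t \<in> cl F {s}" unfolding U_def by blast
      have "(s,t) \<in> RR F" unfolding RR_def
      proof (clarsimp)
        fix X assume X: "X \<in> F"
        show "s \<in> X \<longleftrightarrow> t \<in> X"
        proof
          assume "s \<in> X" then show "t \<in> X" using s X unfolding cl_def by blast
        next
          assume tX: "t \<in> X"
          show "s \<in> X"
          proof (rule ccontr)
            assume "s \<notin> X"
            then have "t \<in> -X" using s neg X unfolding cl_def by blast
            then show False using tX by blast
          qed
        qed
      qed
      moreover have "(s,s) \<in> RR F" unfolding RR_def by auto
      moreover have "RR F `` {s} \<in> P" unfolding P_def by (auto intro: quotientI)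
      ultimately show "t \<in> pad P S" using s unfolding pad_def by blast
    qed
    finally show "cl F S \<subseteq> pad P S" .
  qed
  then show "partitioning (cl F)" using P unfolding partitioning_def by blast
qed

theorem proposition5p6:
  fixes ar :: "'f \<Rightarrow> nat"
    and I_at :: "'p \<Rightarrow> 'a set"
    and I_op :: "'f \<Rightarrow> 'a set list \<Rightarrow> 'a set"
  assumes "finite (UNIV :: 'f set)"
    and "\<forall>f. ar f \<ge> 1"
  shows "(PL ar I_at I_op = par (AD ar I_at I_op)
          \<and> pad (PL ar I_at I_op) = pad (par (AD ar I_at I_op)))
       \<and> (\<forall>P. partition_on UNIV P \<longrightarrow>
            ((strongly_preserving P ar I_at I_op \<longleftrightarrow> P \<preceq>\<^sub>P par (AD ar I_at I_op))
             \<and> (P \<preceq>\<^sub>P par (AD ar I_at I_op) \<longleftrightarrow> pad P \<le> AD ar I_at I_op)))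
       \<and> (closed_inf_conj ar I_at I_op \<longrightarrow>
            (partitioning (AD ar I_at I_op) \<longleftrightarrow> closed_neg ar I_at I_op))"
proof -
  define F where "F = sem I_at I_op ` lang ar"
  have AD: "AD ar I_at I_op = cl F" unfolding AD_def F_def L1 ..
  have PL: "PL ar I_at I_op = UNIV // RR F"
    unfolding PL_def RR_def F_def by (simp add: ball_simps)
  have 1: "PL ar I_at I_op = par (AD ar I_at I_op)" unfolding AD PL par_cl ..
  have 2: "\<forall>P. partition_on UNIV P \<longrightarrow>
            ((strongly_preserving P ar I_at I_op \<longleftrightarrow> P \<preceq>\<^sub>P par (AD ar I_at I_op))
             \<and> (P \<preceq>\<^sub>P par (AD ar I_at I_op) \<longleftrightarrow> pad P \<le> AD ar I_at I_op))"
    unfolding strongly_preserving_def 1[symmetric] using p2 unfolding PL AD by blast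
  have 3: "closed_inf_conj ar I_at I_op \<longrightarrow>
            (partitioning (AD ar I_at I_op) \<longleftrightarrow> closed_neg ar I_at I_op)"
  proof
    assume c: "closed_inf_conj ar I_at I_op"
    have inter: "\<forall>G\<subseteq>F. \<Inter>G \<in> F"
    proof (intro allI impI)
      fix G assume G: "G \<subseteq> F"
      define Phi where "Phi = {\<phi>\<in>lang ar. sem I_at I_op \<phi> \<in> G}"
      have "sem I_at I_op ` Phi = G" using G unfolding Phi_def F_def by auto
      moreover obtain \<psi> where "\<psi> \<in> lang ar" "sem I_at I_op \<psi> = (\<Inter>\<phi>\<in>Phi. sem I_at I_op \<phi>)"
        using c unfolding closed_inf_conj_def Phi_def by (metis (no_types, lifting) mem_Collect_eq subsetI)
      ultimately show "\<Inter>G \<in> F" unfolding F_def by auto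
    qed
    have "closed_neg ar I_at I_op \<longleftrightarrow> (\<forall>X\<in>F. -X \<in> F)"
      unfolding closed_neg_def F_def by (auto simp: image_iff) (metis)+
    then show "partitioning (AD ar I_at I_op) \<longleftrightarrow> closed_neg ar I_at I_op"
      unfolding AD using p3[OF inter] by simp
  qed
  show ?thesis using 1 2 3 by simp
qed

end
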